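(* Let $N_s,\beta,\varepsilon$ be positive integers, $P_b\in(0,1]$, and for $0\le j\le N_s-1$ let $N(j)=N_s-j$, $\gamma(j)=N(j)-\beta$, $\hat{\varepsilon}(j)=\min\{\gamma(j),\varepsilon\}$ (when $\gamma(j)\ge 0$), and $P_W(j)=(1-P_b)^jP_b$. Consider an ED $\mathrm{E}'$ whose wake-up slot $W$ satisfies $P(W=j)=P_W(j)$ for $0\le j\le N_s-1$ (with the remaining probability it never wakes up and transmits nothing), and which, after waking up, transmits according to one of the two schemes described in the context. Then for every slot $s\in\{0,\dots,N_s-1\}$, the probability that $\mathrm{E}'$ transmits a frame in slot $s$ is \[ P_{\mathrm{col}}(s)=\sum_{j=0}^{\min\{N_s-\beta-y,\,s\}}\frac{\beta+r_j}{N(j)}P_W(j)\;+\;\theta_s\sum_{j=N_s-\beta-y+1}^{s}\min\left\{\frac{\beta}{N(j)},1\right\}P_W(j), \] where $r_j=y=\varepsilon$ for the fountain-coding scheme, $r_j=\hat{\varepsilon}(j)$ and $y=0$ for the message-replication scheme, $\theta_s=1$ if $s>N_s-\beta-y$ and $\theta_s=0$ otherwise, and empty sums are zero.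
   Context: An ED has $\beta$ messages to deliver to a UAV during a session of $N_s$ slots (numbered $0,\dots,N_s-1$). An ED waking in slot $i$ may use only the $N(i)=N_s-i$ slots $i,\dots,N_s-1$, transmitting at most one frame per slot; $\varepsilon\ge 1$ is a design parameter. Whenever the ED has $K\le N(i)$ frames to send, it places them in $K$ distinct slots chosen uniformly at random among the $N(i)$ available slots. Fountain-coding scheme: if $\gamma(i)\ge\varepsilon$, the ED sends $\beta+\varepsilon$ coded frames in $\beta+\varepsilon$ uniformly random distinct available slots; if $\gamma(i)<\varepsilon$ and $\beta\le N(i)$, it sends its $\beta$ uncoded messages in $\beta$ uniformly random distinct available slots; if $\beta>N(i)$, it sends $N(i)$ randomly selected messages, one in each available slot. Message-replication scheme: if $\gamma(i)\ge 0$, the ED sends $\beta+\hat{\varepsilon}(i)$ frames (message replicas) in $\beta+\hat{\varepsilon}(i)$ uniformly random distinct available slots; if $\gamma(i)<0$, it sends $N(i)$ randomly selected messages, one in each available slot. *)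

theory Defs
  imports "HOL-Probability.Probability"
begin

datatype scheme = Fountain | Replication

definition Nsl :: "nat \<Rightarrow> nat \<Rightarrow> nat" where
  "Nsl Ns j = Ns - j"

definition gam :: "nat \<Rightarrow> nat \<Rightarrow> nat \<Rightarrow> int" where
  "gam Ns beta j = int (Nsl Ns j) - int beta"

definition epshat :: "nat \<Rightarrow> nat \<Rightarrow> nat \<Rightarrow> nat \<Rightarrow> int" where
  "epshat Ns beta eps j = min (gam Ns beta j) (int eps)"

definition PW :: "real \<Rightarrow> nat \<Rightarrow> real" where
  "PW Pb j = (1 - Pb) ^ j * Pb"

definition nframes :: "scheme \<Rightarrow> nat \<Rightarrow> nat \<Rightarrow> nat \<Rightarrow> nat \<Rightarrow> nat" where
  "nframes sch Ns beta eps j =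
     (case sch of
        Fountain \<Rightarrow>
          (if gam Ns beta j \<ge> int eps then beta + eps
           else if beta \<le> Nsl Ns j then beta
           else Nsl Ns j)
      | Replication \<Rightarrow>
          (if gam Ns beta j \<ge> 0 then beta + nat (epshat Ns beta eps j)
           else Nsl Ns j))"

definition slot_choice :: "nat \<Rightarrow> nat \<Rightarrow> nat \<Rightarrow> nat set pmf" where
  "slot_choice Ns j (K::nat) = pmf_of_set {S. S \<subseteq> {j..<Ns} \<and> card S = K}"

text \<open>The wake-up slot W has P(W = j) = (1-P_b)^j P_b (geometric); if W \<ge> N_s the ED
  never wakes up during the session and transmits nothing.\<close>
definition tx_slots :: "scheme \<Rightarrow> nat \<Rightarrow> nat \<Rightarrow> nat \<Rightarrow> real \<Rightarrow> nat set pmf" where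
  "tx_slots sch Ns beta eps Pb =
     bind_pmf (geometric_pmf Pb)
       (\<lambda>j. if j < Ns then slot_choice Ns j (nframes sch Ns beta eps j)
            else return_pmf {})"

definition r_par :: "scheme \<Rightarrow> nat \<Rightarrow> nat \<Rightarrow> nat \<Rightarrow> nat \<Rightarrow> int" where
  "r_par sch Ns beta eps j = (case sch of Fountain \<Rightarrow> int eps | Replication \<Rightarrow> epshat Ns beta eps j)"

definition y_par :: "scheme \<Rightarrow> nat \<Rightarrow> int" where
  "y_par sch eps = (case sch of Fountain \<Rightarrow> int eps | Replication \<Rightarrow> 0)"

end

theory Submission imports Defs begin
lemma prob_bind_pmf:
  "measure_pmf.prob (bind_pmf p f) B = measure_pmf.expectation p (\<lambda>x. measure_pmf.prob (f x) B)"
  unfolding measure_pmf_bind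
  apply (rule measure_pmf.measure_bind[where N="count_space UNIV"])
  apply (auto simp: space_subprob_algebra measure_pmf.subprob_space_axioms)
  done

lemma frac_eq_rule: "(a::real) * b = c * d \<Longrightarrow> c > 0 \<Longrightarrow> a > 0 \<Longrightarrow> b / c = d / a"
  by (simp add: frac_eq_eq mult.commute)

lemma prob_ksubset:
  assumes A: "finite A" and K: "K \<le> card A"
  shows "measure_pmf.prob (pmf_of_set {S. S \<subseteq> A \<and> card S = K}) {S. s \<in> S}
     = (if s \<in> A then real K / real (card A) else 0)"
proof -
  let ?X = "{S. S \<subseteq> A \<and> card S = K}"
  have fin: "finite ?X" using A by (auto intro: finite_subset[of _ "Pow A"])
  have cX: "card ?X = card A choose K" using n_subsets[OF A] .
  have ne: "?X \<noteq> {}" using cX K by (metis card.empty zero_less_binomial_iff less_irrefl)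
  have m: "measure_pmf.prob (pmf_of_set ?X) {S. s \<in> S} = real (card (?X \<inter> {S. s \<in> S})) / real (card ?X)"
    using measure_pmf_of_set[OF ne fin] .
  show ?thesis
  proof (cases "s \<in> A \<and> K > 0")
    case False
    then have "?X \<inter> {S. s \<in> S} = {}" using A
      by (auto dest: finite_subset simp: card_eq_0_iff)
    then show ?thesis using m False by auto
  next
    case True
    then obtain k where k: "K = Suc k" by (cases K) auto
    have "card (?X \<inter> {S. s \<in> S}) = card {T. T \<subseteq> A - {s} \<and> card T = k}"
    proof (rule card_bij_eq[where f="\<lambda>S. S - {s}" and g="insert s"])
      show "inj_on (\<lambda>S. S - {s}) (?X \<inter> {S. s \<in> S})" by (auto simp: inj_on_def)
      show "(\<lambda>S. S - {s}) ` (?X \<inter> {S. s \<in> S}) \<subseteq> {T. T \<subseteq> A - {s} \<and> card T = k}"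
        using A k by (auto dest: finite_subset)
      show "inj_on (insert s) {T. T \<subseteq> A - {s} \<and> card T = k}" by (auto simp: inj_on_def)
      show "insert s ` {T. T \<subseteq> A - {s} \<and> card T = k} \<subseteq> ?X \<inter> {S. s \<in> S}"
      proof
        fix S assume "S \<in> insert s ` {T. T \<subseteq> A - {s} \<and> card T = k}"
        then obtain T where T: "T \<subseteq> A - {s}" "card T = k" "S = insert s T" by auto
        have "finite T" using T(1) A by (meson finite_Diff finite_subset)
        moreover have "s \<notin> T" using T(1) by auto
        ultimately have "card S = Suc k" using T by simp
        then show "S \<in> ?X \<inter> {S. s \<in> S}" using T True k by auto
      qed

      show "finite (?X \<inter> {S. s \<in> S})" using fin by auto
      show "finite {T. T \<subseteq> A - {s} \<and> card T = k}" using A by (auto intro: finite_subset[of _ "Pow A"])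
    qed
    also have "\<dots> = (card A - 1) choose k" using n_subsets[of "A - {s}" k] A True by auto
    finally have c1: "card (?X \<inter> {S. s \<in> S}) = (card A - 1) choose k" .
    obtain n where n: "card A = Suc n" using True A by (cases "card A") (auto simp: card_eq_0_iff)
    have e: "Suc n * (n choose k) = (Suc n choose Suc k) * Suc k" by (rule Suc_times_binomial_eq)
    have pos: "(Suc n choose Suc k) > 0" using K k n by simp
    have e': "real (Suc n) * real (n choose k) = real (Suc n choose Suc k) * real (Suc k)"
      by (metis e of_nat_mult)
    have q: "real (n choose k) / real (Suc n choose Suc k) = real (Suc k) / real (Suc n)"
      using pos e' by (intro frac_eq_rule) (simp_all del: binomial_Suc_Suc)
    have "measure_pmf.prob (pmf_of_set ?X) {S. s \<in> S} = real (n choose k) / real (Suc n choose Suc k)"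
      using m c1 cX n k by (simp del: binomial_Suc_Suc)
    then show ?thesis using q n k True by simp
  qed
qed

lemma nframes_le: "j < Ns \<Longrightarrow> nframes sch Ns beta eps j \<le> Nsl Ns j"
  by (cases sch) (auto simp: nframes_def gam_def epshat_def Nsl_def)

lemma case1:
  assumes "j < Ns" "int j \<le> int Ns - int beta - y_par sch eps"
  shows "real (nframes sch Ns beta eps j) = real beta + of_int (r_par sch Ns beta eps j)"
  using assms by (cases sch) (auto simp: nframes_def gam_def epshat_def Nsl_def y_par_def r_par_def)

lemma case2:
  assumes "j < Ns" "\<not> int j \<le> int Ns - int beta - y_par sch eps"
  shows "real (nframes sch Ns beta eps j) / real (Nsl Ns j) = min (real beta / real (Nsl Ns j)) 1"
proof -
  have N: "real (Nsl Ns j) > 0" using assms by (simp add: Nsl_def)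
  show ?thesis
  proof (cases sch)
    case Fountain
    show ?thesis
    proof (cases "beta \<le> Nsl Ns j")
      case True
      then have "real beta / real (Nsl Ns j) \<le> 1" using N by simp
      moreover have "\<not> int eps \<le> gam Ns beta j" using assms Fountain by (simp add: gam_def Nsl_def y_par_def)
      ultimately show ?thesis using True Fountain by (auto simp: nframes_def)
    next
      case False
      then have "real beta / real (Nsl Ns j) > 1" using N by simp
      moreover have "\<not> int eps \<le> gam Ns beta j" using False by (simp add: gam_def)
      ultimately show ?thesis using False Fountain N by (auto simp: nframes_def)
    qed
  next
    case Replication
    then have "beta > Nsl Ns j" using assms by (auto simp: y_par_def Nsl_def)
    then have "real beta / real (Nsl Ns j) > 1" using N by simp
    then show ?thesis using assms Replication N by (auto simp: nframes_def gam_def y_par_def)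
  qed
qed

theorem lemma2:
  fixes Ns beta eps s :: nat and Pb :: real and sch :: scheme
  assumes "Ns > 0" "beta > 0" "eps > 0" "0 < Pb" "Pb \<le> 1" "s < Ns"
  shows "measure_pmf.prob (tx_slots sch Ns beta eps Pb) {S. s \<in> S} =
     (\<Sum>j \<in> {0 .. min (int Ns - int beta - y_par sch eps) (int s)}.
        (real beta + of_int (r_par sch Ns beta eps (nat j))) / real (Nsl Ns (nat j)) * PW Pb (nat j))
   + (if int s > int Ns - int beta - y_par sch eps then 1 else 0) *
     (\<Sum>j \<in> {max 0 (int Ns - int beta - y_par sch eps + 1) .. int s}.
        min (real beta / real (Nsl Ns (nat j))) 1 * PW Pb (nat j))"
proof -
  define T where "T = int Ns - int beta - y_par sch eps"
  define g where "g j = real (nframes sch Ns beta eps j) / real (Nsl Ns j)" for j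
  define h1 where "h1 j = (real beta + of_int (r_par sch Ns beta eps j)) / real (Nsl Ns j) * PW Pb j" for j
  define h2 where "h2 j = min (real beta / real (Nsl Ns j)) 1 * PW Pb j" for j
  define f where "f j = measure_pmf.prob (if j < Ns then slot_choice Ns j (nframes sch Ns beta eps j)
            else return_pmf {}) {S. s \<in> S}" for j
  have fj: "f j = (if j \<le> s then g j else 0)" for j
  proof (cases "j < Ns")
    case True
    have "f j = (if s \<in> {j..<Ns} then real (nframes sch Ns beta eps j) / real (card {j..<Ns}) else 0)"
      unfolding f_def slot_choice_def using True
      by (simp add: prob_ksubset nframes_le[of j Ns, unfolded Nsl_def])
    then show ?thesis using assms True by (auto simp: g_def Nsl_def)
  next
    case False
    then show ?thesis using assms by (auto simp: f_def)
  qed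
  have "measure_pmf.prob (tx_slots sch Ns beta eps Pb) {S. s \<in> S} = measure_pmf.expectation (geometric_pmf Pb) f"
    unfolding tx_slots_def prob_bind_pmf f_def by (simp add: if_distrib)
  also have "\<dots> = (\<Sum>j\<in>{..s}. f j * pmf (geometric_pmf Pb) j)"
    by (rule integral_measure_pmf_real) (auto simp: fj split: if_splits)
  also have "\<dots> = (\<Sum>j\<in>{..s}. if int j \<le> T then h1 j else h2 j)"
  proof (rule sum.cong)
    fix j assume j: "j \<in> {..s}"
    then have jN: "j < Ns" using assms by auto
    have fg: "f j * pmf (geometric_pmf Pb) j = g j * PW Pb j"
      using j assms by (simp add: fj PW_def pmf_geometric)
    show "f j * pmf (geometric_pmf Pb) j = (if int j \<le> T then h1 j else h2 j)"
    proof (cases "int j \<le> T")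
      case True
      then show ?thesis unfolding fg g_def h1_def using case1[OF jN, of beta sch eps] by (simp add: T_def)
    next
      case False
      then show ?thesis unfolding fg g_def h2_def using case2[OF jN, of beta sch eps] by (simp add: T_def)
    qed
  qed simp
  also have "\<dots> = sum h1 ({..s} \<inter> {j. int j \<le> T}) + sum h2 ({..s} \<inter> - {j. int j \<le> T})"
    by (rule sum.If_cases) simp
  also have "sum h1 ({..s} \<inter> {j. int j \<le> T}) = (\<Sum>j \<in> {0 .. min T (int s)}. h1 (nat j))"
  proof -
    have e: "{0 .. min T (int s)} = int ` ({..s} \<inter> {j. int j \<le> T})"
    proof (intro equalityI subsetI)
      fix x assume "x \<in> {0 .. min T (int s)}"
      then show "x \<in> int ` ({..s} \<inter> {j. int j \<le> T})" by (intro image_eqI[of _ _ "nat x"]) auto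
    qed auto
    show ?thesis unfolding e by (subst sum.reindex) (auto simp: inj_on_def)
  qed
  also have "sum h2 ({..s} \<inter> - {j. int j \<le> T}) = (if int s > T then 1 else 0) *
     (\<Sum>j \<in> {max 0 (T + 1) .. int s}. h2 (nat j))"
  proof (cases "int s > T")
    case True
    have e: "{max 0 (T + 1) .. int s} = int ` ({..s} \<inter> - {j. int j \<le> T})"
    proof (intro equalityI subsetI)
      fix x assume "x \<in> {max 0 (T + 1) .. int s}"
      then show "x \<in> int ` ({..s} \<inter> - {j. int j \<le> T})" by (intro image_eqI[of _ _ "nat x"]) auto
    qed auto
    show ?thesis using True unfolding e by (subst sum.reindex) (auto simp: inj_on_def)
  next
    case False
    then have "{..s} \<inter> - {j. int j \<le> T} = {}" by auto
    then show ?thesis using False by simp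
  qed
  finally show ?thesis unfolding T_def h1_def h2_def .
qed

end
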